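(* The Uniform Price Auction is incentive compatible (with public budgets), never charges an agent more than its budget, and for every input its allocation $x$ satisfies $\bar W(x)\ge\frac12\bar W^*$.
   Context: Uniform Price Auction: one unit of a divisible good, $n$ agents with values per unit $v_i>0$ and publicly known budgets $B_i>0$. Relabel agents so that $v_1\ge\dots\ge v_n$ and set $v_{n+1}=0$. Let $k\in\{0,\dots,n\}$ be the largest integer with $\sum_{j=1}^kB_j\le v_k$ (the empty sum is $0$, and $k=0$ is always admissible). Case I: if $\sum_{j=1}^kB_j>v_{k+1}$, allocate $x_i=B_i/\sum_{j=1}^kB_j$ for $i\le k$ and $0$ to everyone else. Case II: if $\sum_{j=1}^kB_j\le v_{k+1}$, allocate $x_i=B_i/v_{k+1}$ for $i\le k$, $x_{k+1}=1-\sum_{j=1}^kx_j$, and $0$ to everyone else. Payments are given by Myerson's formula $\pi_i(v)=v_ix_i(v)-\int_0^{v_i}x_i(u,v_{-i})\,du$. Agent utility is $v_ix_i-\pi_i$ if $\pi_i\le B_i$ and $-\infty$ otherwise; incentive compatibility means truthfully reporting the value maximizes utility for all reports of others. Liquid welfare: $\bar W(x)=\sum_i\min\{v_ix_i,B_i\}$; $\bar W^*=\max\{\bar W(x):x\in\mathbb R^n_{\ge0},\sum_ix_i=1\}$. *)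

theory Defs
  imports "HOL-Analysis.Analysis"
begin

text \<open>Agents are 0,...,n-1. Values v and budgets B are functions nat => real
(only the entries below n matter). The relabelling v_1 >= ... >= v_n is the
stable sort of the agents by decreasing value, ties broken by agent index.\<close>

definition upa_order :: "nat \<Rightarrow> (nat \<Rightarrow> real) \<Rightarrow> nat list" where
  "upa_order n v = sort_key (\<lambda>i. - v i) [0..<n]"

text \<open>Sorted value of the agent at (1-based) position j; 0 for j = n+1 (and beyond).\<close>
definition upa_sv :: "nat \<Rightarrow> (nat \<Rightarrow> real) \<Rightarrow> nat \<Rightarrow> real" where
  "upa_sv n v j = (if 1 \<le> j \<and> j \<le> n then v (upa_order n v ! (j - 1)) else 0)"

definition upa_sB :: "nat \<Rightarrow> (nat \<Rightarrow> real) \<Rightarrow> (nat \<Rightarrow> real) \<Rightarrow> nat \<Rightarrow> real" where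
  "upa_sB n B v j = B (upa_order n v ! (j - 1))"

definition upa_S :: "nat \<Rightarrow> (nat \<Rightarrow> real) \<Rightarrow> (nat \<Rightarrow> real) \<Rightarrow> nat \<Rightarrow> real" where
  "upa_S n B v k = (\<Sum>j=1..k. upa_sB n B v j)"

definition upa_k :: "nat \<Rightarrow> (nat \<Rightarrow> real) \<Rightarrow> (nat \<Rightarrow> real) \<Rightarrow> nat" where
  "upa_k n B v = (GREATEST k. k \<le> n \<and> (k = 0 \<or> upa_S n B v k \<le> upa_sv n v k))"

definition upa_posalloc :: "nat \<Rightarrow> (nat \<Rightarrow> real) \<Rightarrow> (nat \<Rightarrow> real) \<Rightarrow> nat \<Rightarrow> real" where
  "upa_posalloc n B v j =
     (let k = upa_k n B v; S = upa_S n B v k in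
      if S > upa_sv n v (k + 1) then
        (if 1 \<le> j \<and> j \<le> k then upa_sB n B v j / S else 0)
      else
        (if 1 \<le> j \<and> j \<le> k then upa_sB n B v j / upa_sv n v (k + 1)
         else if j = k + 1 then 1 - (\<Sum>l=1..k. upa_sB n B v l / upa_sv n v (k + 1))
         else 0))"

definition upa_alloc :: "nat \<Rightarrow> (nat \<Rightarrow> real) \<Rightarrow> (nat \<Rightarrow> real) \<Rightarrow> nat \<Rightarrow> real" where
  "upa_alloc n B v i =
     (\<Sum>j=1..n. if upa_order n v ! (j - 1) = i then upa_posalloc n B v j else 0)"

definition upa_pay :: "nat \<Rightarrow> (nat \<Rightarrow> real) \<Rightarrow> (nat \<Rightarrow> real) \<Rightarrow> nat \<Rightarrow> real" where
  "upa_pay n B v i = v i * upa_alloc n B v i - integral {0..v i} (\<lambda>u. upa_alloc n B (v(i := u)) i)"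

definition upa_util :: "nat \<Rightarrow> (nat \<Rightarrow> real) \<Rightarrow> (nat \<Rightarrow> real) \<Rightarrow> (nat \<Rightarrow> real) \<Rightarrow> nat \<Rightarrow> ereal" where
  "upa_util n B v w i =
     (if upa_pay n B w i \<le> B i then ereal (v i * upa_alloc n B w i - upa_pay n B w i) else -\<infinity>)"

definition valid_profile :: "nat \<Rightarrow> (nat \<Rightarrow> real) \<Rightarrow> bool" where
  "valid_profile n v \<longleftrightarrow> (\<forall>i<n. v i > 0)"

definition liquid_welfare :: "nat \<Rightarrow> (nat \<Rightarrow> real) \<Rightarrow> (nat \<Rightarrow> real) \<Rightarrow> (nat \<Rightarrow> real) \<Rightarrow> real" where
  "liquid_welfare n B v x = (\<Sum>i<n. min (v i * x i) (B i))"

definition opt_liquid_welfare :: "nat \<Rightarrow> (nat \<Rightarrow> real) \<Rightarrow> (nat \<Rightarrow> real) \<Rightarrow> real" where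
  "opt_liquid_welfare n B v =
     Sup {liquid_welfare n B v x | x. (\<forall>i<n. x i \<ge> 0) \<and> (\<Sum>i<n. x i) = 1}"

end

theory Submission
  imports Defs
begin


lemma ord_props:
  shows "length (upa_order n v) = n" "distinct (upa_order n v)" "set (upa_order n v) = {0..<n}"
  unfolding upa_order_def by simp_all

lemma ord_sorted:
  assumes "a \<le> b" "b < n"
  shows "v (upa_order n v ! b) \<le> v (upa_order n v ! a)"
proof -
  have "sorted (map (\<lambda>i. - v i) (upa_order n v))"
    unfolding upa_order_def by (rule sorted_sort_key)
  then have "map (\<lambda>i. - v i) (upa_order n v) ! a \<le> map (\<lambda>i. - v i) (upa_order n v) ! b"
    using assms by (intro sorted_nth_mono) (auto simp: ord_props)
  then show ?thesis using assms by (simp add: ord_props)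
qed

lemma ord_lt: "a < n \<Longrightarrow> upa_order n v ! a < n"
  using ord_props[of n v] nth_mem by (metis atLeastLessThan_iff)

lemma sum_shift1: "(\<Sum>j=1..n. g j) = (\<Sum>a<n. g (Suc a))"
  by (induction n) auto

lemma bij_pos: "bij_betw (\<lambda>j. upa_order n v ! (j - 1)) {1..n} {0..<n}"
proof -
  have "bij_betw ((!) (upa_order n v)) {..<n} {0..<n}"
    using bij_betw_nth[of "upa_order n v" "{..<n}" "{0..<n}"] ord_props by simp
  moreover have "bij_betw (\<lambda>j. j - 1) {1..n} {..<n}"
    by (rule bij_betwI[where g="Suc"]) auto
  ultimately show ?thesis using bij_betw_trans[of "\<lambda>j. j - 1" "{1..n}" "{..<n}"]
    by (simp add: comp_def)
qed

lemma sum_agents_pos: "(\<Sum>i<n. h i) = (\<Sum>j=1..n. h (upa_order n v ! (j - 1)))"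
proof -
  have "(\<Sum>i\<in>{0..<n}. h i) = (\<Sum>j\<in>{1..n}. h (upa_order n v ! (j - 1)))"
    using sum.reindex_bij_betw[OF bij_pos[of n v], of h] by simp
  then show ?thesis by (simp add: atLeast0LessThan)
qed

lemma alloc_pos:
  assumes "1 \<le> j0" "j0 \<le> n"
  shows "upa_alloc n B v (upa_order n v ! (j0 - 1)) = upa_posalloc n B v j0"
proof -
  have inj: "inj_on (\<lambda>j. upa_order n v ! (j - 1)) {1..n}"
    using bij_pos bij_betw_def by blast
  have "upa_alloc n B v (upa_order n v ! (j0 - 1)) =
        (\<Sum>j=1..n. if j = j0 then upa_posalloc n B v j else 0)"
    unfolding upa_alloc_def
  proof (rule sum.cong[OF refl])
    fix j assume j: "j \<in> {1..n}"
    have "upa_order n v ! (j - 1) = upa_order n v ! (j0 - 1) \<longleftrightarrow> j = j0"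
      using inj_onD[OF inj _ j] assms by auto
    then show "(if upa_order n v ! (j - 1) = upa_order n v ! (j0 - 1) then upa_posalloc n B v j else 0)
          = (if j = j0 then upa_posalloc n B v j else 0)" by simp
  qed
  also have "\<dots> = upa_posalloc n B v j0" using assms by simp
  finally show ?thesis .
qed

lemma agent_pos: "i < n \<Longrightarrow> \<exists>j. 1 \<le> j \<and> j \<le> n \<and> upa_order n v ! (j - 1) = i"
proof -
  assume "i < n"
  then have "i \<in> (\<lambda>j. upa_order n v ! (j - 1)) ` {1..n}"
    using bij_pos[of n v] unfolding bij_betw_def by simp
  then show ?thesis by auto
qed



lemma sv_nonneg: "\<forall>j<n. v j \<ge> 0 \<Longrightarrow> upa_sv n v j \<ge> 0"
  unfolding upa_sv_def using ord_lt by auto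

lemma sv_mono:
  assumes "\<forall>j<n. v j \<ge> 0" "1 \<le> a" "a \<le> b"
  shows "upa_sv n v b \<le> upa_sv n v a"
proof (cases "b \<le> n")
  case True
  then show ?thesis unfolding upa_sv_def using assms ord_sorted[of "a - 1" "b - 1" n v] by auto
next
  case False
  then show ?thesis using sv_nonneg[OF assms(1)] by (simp add: upa_sv_def)
qed

lemma sB_pos: "\<forall>j<n. B j > 0 \<Longrightarrow> 1 \<le> j \<Longrightarrow> j \<le> n \<Longrightarrow> upa_sB n B v j > 0"
  unfolding upa_sB_def using ord_lt[of "j - 1" n v] by auto

lemma S_Suc: "upa_S n B v (Suc m) = upa_S n B v m + upa_sB n B v (Suc m)"
  unfolding upa_S_def by simp

lemma S_0: "upa_S n B v 0 = 0" unfolding upa_S_def by simp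

lemma S_mono:
  assumes "\<forall>j<n. B j > 0" "a \<le> b" "b \<le> n"
  shows "upa_S n B v a \<le> upa_S n B v b"
  using assms(2,3)
proof (induction b)
  case 0 then show ?case by simp
next
  case (Suc b)
  show ?case
  proof (cases "a = Suc b")
    case True then show ?thesis by simp
  next
    case False
    then have "upa_S n B v a \<le> upa_S n B v b" using Suc by simp
    moreover have "upa_sB n B v (Suc b) > 0" using sB_pos[OF assms(1)] Suc by simp
    ultimately show ?thesis by (simp add: S_Suc)
  qed
qed

lemma S_pos:
  assumes "\<forall>j<n. B j > 0" "1 \<le> a" "a \<le> n"
  shows "upa_S n B v a > 0"
proof -
  have "upa_S n B v 1 > 0" using sB_pos[OF assms(1), of 1 v] assms by (simp add: upa_S_def)
  then show ?thesis using S_mono[OF assms(1) assms(2) assms(3), of v] by simp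
qed

lemma k_props:
  shows "upa_k n B v \<le> n"
    "upa_k n B v = 0 \<or> upa_S n B v (upa_k n B v) \<le> upa_sv n v (upa_k n B v)"
    "\<And>m. upa_k n B v < m \<Longrightarrow> m \<le> n \<Longrightarrow> upa_S n B v m > upa_sv n v m"
proof -
  let ?P = "\<lambda>k. k \<le> n \<and> (k = 0 \<or> upa_S n B v k \<le> upa_sv n v k)"
  have P0: "?P 0" by simp
  have bd: "\<forall>y. ?P y \<longrightarrow> y \<le> n" by simp
  have Pk: "?P (upa_k n B v)" unfolding upa_k_def using GreatestI_nat[of ?P 0 n] P0 bd by blast
  then show "upa_k n B v \<le> n" "upa_k n B v = 0 \<or> upa_S n B v (upa_k n B v) \<le> upa_sv n v (upa_k n B v)"
    by auto
  fix m assume m: "upa_k n B v < m" "m \<le> n"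
  show "upa_S n B v m > upa_sv n v m"
  proof (rule ccontr)
    assume "\<not> ?thesis"
    then have "?P m" using m by auto
    then have "m \<le> upa_k n B v" unfolding upa_k_def using Greatest_le_nat[of ?P m n] bd by blast
    then show False using m by simp
  qed
qed

definition upa_p :: "nat \<Rightarrow> (nat \<Rightarrow> real) \<Rightarrow> (nat \<Rightarrow> real) \<Rightarrow> real" where
  "upa_p n B v = max (upa_S n B v (upa_k n B v)) (upa_sv n v (upa_k n B v + 1))"

lemma p_pos:
  assumes "\<forall>j<n. B j > 0" "\<forall>j<n. v j \<ge> 0" "\<exists>j<n. v j > 0"
  shows "upa_p n B v > 0"
proof (cases "upa_k n B v = 0")
  case True
  obtain i where i: "i < n" "v i > 0" using assms(3) by auto
  obtain j where j: "1 \<le> j" "j \<le> n" "upa_order n v ! (j - 1) = i" using agent_pos[OF i(1)] by auto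
  have "upa_sv n v j > 0" using i j by (simp add: upa_sv_def)
  then have "upa_sv n v 1 > 0" using sv_mono[OF assms(2), of 1 j] j by simp
  then show ?thesis using True by (simp add: upa_p_def)
next
  case False
  then have "upa_S n B v (upa_k n B v) > 0" using S_pos[OF assms(1)] k_props(1)[of n B v] by simp
  then show ?thesis by (simp add: upa_p_def)
qed

lemma posalloc_eq:
  assumes "\<forall>j<n. B j > 0" "\<forall>j<n. v j \<ge> 0"
  shows "upa_posalloc n B v j =
    (if 1 \<le> j \<and> j \<le> upa_k n B v then upa_sB n B v j / upa_p n B v
     else if j = upa_k n B v + 1 then 1 - upa_S n B v (upa_k n B v) / upa_p n B v else 0)"
proof (cases "upa_S n B v (upa_k n B v) > upa_sv n v (upa_k n B v + 1)")
  case True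
  have "upa_S n B v (upa_k n B v) > 0" using True sv_nonneg[OF assms(2), of "upa_k n B v + 1"] by simp
  then show ?thesis using True unfolding upa_posalloc_def upa_p_def Let_def by auto
next
  case False
  have "(\<Sum>l=1..upa_k n B v. upa_sB n B v l / upa_sv n v (upa_k n B v + 1))
        = upa_S n B v (upa_k n B v) / upa_sv n v (upa_k n B v + 1)"
    unfolding upa_S_def by (simp add: sum_divide_distrib)
  then show ?thesis using False unfolding upa_posalloc_def upa_p_def Let_def by auto
qed



locale upa_ctx =
  fixes n :: nat and B v :: "nat \<Rightarrow> real"
  assumes Bpos: "\<forall>j<n. B j > 0" and vnn: "\<forall>j<n. v j \<ge> 0" and vex: "\<exists>j<n. v j > 0"
begin

abbreviation "k \<equiv> upa_k n B v"
abbreviation "p \<equiv> upa_p n B v"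

lemma ppos: "p > 0" using p_pos[OF Bpos vnn vex] .

lemma Sk_le_p: "upa_S n B v k \<le> p" unfolding upa_p_def by simp

lemma sv_ge_p: "1 \<le> j \<Longrightarrow> j \<le> k \<Longrightarrow> upa_sv n v j \<ge> p"
proof -
  assume j: "1 \<le> j" "j \<le> k"
  have "upa_S n B v k \<le> upa_sv n v k" using k_props(2)[of n B v] j by auto
  moreover have "upa_sv n v k \<le> upa_sv n v j" using sv_mono[OF vnn] j by simp
  moreover have "upa_sv n v (k+1) \<le> upa_sv n v j" using sv_mono[OF vnn] j by simp
  ultimately show ?thesis unfolding upa_p_def by simp
qed

lemma sv_le_p: "k < j \<Longrightarrow> upa_sv n v j \<le> p"
proof -
  assume j: "k < j"
  have "upa_sv n v j \<le> upa_sv n v (k+1)" using sv_mono[OF vnn, of "k+1" j] j by simp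
  then show ?thesis unfolding upa_p_def by simp
qed

lemma pa: "upa_posalloc n B v j =
    (if 1 \<le> j \<and> j \<le> k then upa_sB n B v j / p
     else if j = k + 1 then 1 - upa_S n B v k / p else 0)"
  using posalloc_eq[OF Bpos vnn] .

lemma pa_nonneg: "1 \<le> j \<Longrightarrow> j \<le> n \<Longrightarrow> upa_posalloc n B v j \<ge> 0"
  using ppos Sk_le_p sB_pos[OF Bpos, of j v] by (auto simp: pa)

lemma pa_gt: "1 \<le> j \<Longrightarrow> j \<le> n \<Longrightarrow> upa_sv n v j > p \<Longrightarrow> upa_posalloc n B v j = upa_sB n B v j / p"
  using sv_le_p[of j] by (cases "j \<le> k") (auto simp: pa)

lemma pa_lt: "1 \<le> j \<Longrightarrow> j \<le> n \<Longrightarrow> upa_sv n v j < p \<Longrightarrow> upa_posalloc n B v j = 0"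
proof -
  assume j: "1 \<le> j" "j \<le> n" "upa_sv n v j < p"
  have "\<not> j \<le> k" using sv_ge_p[of j] j by auto
  moreover have "j = k + 1 \<Longrightarrow> p = upa_S n B v k"
    using j unfolding upa_p_def by (auto simp: max_def split: if_splits)
  ultimately show ?thesis using ppos by (auto simp: pa)
qed

lemma pa_eq: "1 \<le> j \<Longrightarrow> j \<le> n \<Longrightarrow> upa_sv n v j = p \<Longrightarrow> upa_posalloc n B v j \<le> upa_sB n B v j / p"
proof -
  assume j: "1 \<le> j" "j \<le> n" "upa_sv n v j = p"
  show ?thesis
  proof (cases "j = k + 1")
    case True
    have "upa_S n B v (k+1) > upa_sv n v (k+1)" using k_props(3)[of n B v "k+1"] True j by simp
    moreover have "upa_S n B v k \<le> upa_S n B v (k+1)" using S_mono[OF Bpos, of k "k+1" v] True j by simp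
    ultimately have "p \<le> upa_S n B v k + upa_sB n B v (k+1)"
      unfolding upa_p_def by (simp add: S_Suc)
    then have "(p - upa_S n B v k) / p \<le> upa_sB n B v (k+1) / p"
      using ppos by (intro divide_right_mono) auto
    moreover have "(p - upa_S n B v k) / p = 1 - upa_S n B v k / p"
      using ppos by (simp add: diff_divide_distrib)
    ultimately have "1 - upa_S n B v k / p \<le> upa_sB n B v (k+1) / p" by simp
    then show ?thesis using True by (simp add: pa)
  next
    case False
    then show ?thesis using ppos sB_pos[OF Bpos, of j v] j by (auto simp: pa)
  qed
qed

lemma pa_sum: "n \<ge> 1 \<Longrightarrow> (\<Sum>j=1..n. upa_posalloc n B v j) = 1"
proof -
  assume n: "n \<ge> 1"
  have kn: "k \<le> n" using k_props(1) .
  have "(\<Sum>j=1..n. upa_posalloc n B v j) =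
        (\<Sum>j=1..n. (if j \<le> k then upa_sB n B v j / p else 0)) +
        (\<Sum>j=1..n. (if j = k + 1 then 1 - upa_S n B v k / p else 0))"
    unfolding sum.distrib[symmetric] by (rule sum.cong) (auto simp: pa)
  also have "(\<Sum>j=1..n. (if j \<le> k then upa_sB n B v j / p else 0)) = (\<Sum>j=1..k. upa_sB n B v j / p)"
  proof -
    have "(\<Sum>j=1..n. (if j \<le> k then upa_sB n B v j / p else 0)) = (\<Sum>j\<in>{j\<in>{1..n}. j \<le> k}. upa_sB n B v j / p)"
      by (rule sum.inter_filter[symmetric]) simp
    also have "{j\<in>{1..n}. j \<le> k} = {1..k}" using kn by auto
    finally show ?thesis .
  qed
  also have "\<dots> = upa_S n B v k / p" unfolding upa_S_def by (simp add: sum_divide_distrib)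
  also have "(\<Sum>j=1..n. (if j = k + 1 then 1 - upa_S n B v k / p else 0)) =
             (if k + 1 \<le> n then 1 - upa_S n B v k / p else 0)"
    by (simp add: sum.delta')
  finally have eq: "(\<Sum>j=1..n. upa_posalloc n B v j) =
       upa_S n B v k / p + (if k + 1 \<le> n then 1 - upa_S n B v k / p else 0)" .
  show ?thesis
  proof (cases "k + 1 \<le> n")
    case True then show ?thesis using eq by simp
  next
    case False
    then have "k = n" using kn by simp
    then have "upa_S n B v k > 0" using S_pos[OF Bpos, of n v] n by simp
    moreover have "upa_sv n v (k+1) = 0" using \<open>k = n\<close> by (simp add: upa_sv_def)
    ultimately have "p = upa_S n B v k" unfolding upa_p_def by simp
    then show ?thesis using eq False ppos by simp
  qed
qed

end

definition price_ok :: "nat \<Rightarrow> (nat \<Rightarrow> real) \<Rightarrow> (nat \<Rightarrow> real) \<Rightarrow> (nat \<Rightarrow> real) \<Rightarrow> real \<Rightarrow> bool" where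
  "price_ok n B w x q \<longleftrightarrow> q > 0 \<and> (\<forall>j<n. x j \<ge> 0) \<and> (\<Sum>j<n. x j) = 1 \<and>
     (\<forall>j<n. w j > q \<longrightarrow> x j = B j / q) \<and> (\<forall>j<n. w j < q \<longrightarrow> x j = 0) \<and>
     (\<forall>j<n. w j = q \<longrightarrow> x j \<le> B j / q)"

lemma upa_price_ok:
  assumes n: "n \<ge> 1" and Bpos: "\<forall>j<n. B j > 0" and vnn: "\<forall>j<n. v j \<ge> 0" and vex: "\<exists>j<n. v j > 0"
  shows "price_ok n B v (upa_alloc n B v) (upa_p n B v)"
proof -
  interpret upa_ctx n B v using assms by unfold_locales
  have ag: "\<And>i. i < n \<Longrightarrow> \<exists>j. 1 \<le> j \<and> j \<le> n \<and> upa_order n v ! (j - 1) = i \<and>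
      upa_alloc n B v i = upa_posalloc n B v j \<and> v i = upa_sv n v j \<and> B i = upa_sB n B v j"
  proof -
    fix i assume "i < n"
    then obtain j where j: "1 \<le> j" "j \<le> n" "upa_order n v ! (j - 1) = i" using agent_pos by blast
    then show "?thesis i" using alloc_pos[of j n B v]
      by (intro exI[of _ j]) (auto simp: upa_sv_def upa_sB_def)
  qed
  have sum: "(\<Sum>j<n. upa_alloc n B v j) = 1"
  proof -
    have "(\<Sum>j<n. upa_alloc n B v j) = (\<Sum>j=1..n. upa_alloc n B v (upa_order n v ! (j - 1)))"
      by (rule sum_agents_pos)
    also have "\<dots> = (\<Sum>j=1..n. upa_posalloc n B v j)"
      by (rule sum.cong[OF refl]) (use alloc_pos in auto)
    finally show ?thesis using pa_sum[OF n] by simp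
  qed
  show ?thesis unfolding price_ok_def
  proof (intro conjI allI impI)
    show "p > 0" by (rule ppos)
    show "(\<Sum>j<n. upa_alloc n B v j) = 1" by (rule sum)
  next
    fix i assume "i < n" then obtain j where j: "1 \<le> j" "j \<le> n" "upa_alloc n B v i = upa_posalloc n B v j"
      "v i = upa_sv n v j" "B i = upa_sB n B v j" using ag by blast
    show "upa_alloc n B v i \<ge> 0" using pa_nonneg j by simp
    { assume "v i > p" then show "upa_alloc n B v i = B i / p" using pa_gt j by simp }
    { assume "v i < p" then show "upa_alloc n B v i = 0" using pa_lt j by simp }
    { assume "v i = p" then show "upa_alloc n B v i \<le> B i / p" using pa_eq j by simp }
  qed
qed



definition Lo :: "nat \<Rightarrow> (nat \<Rightarrow> real) \<Rightarrow> nat \<Rightarrow> (nat \<Rightarrow> real) \<Rightarrow> real \<Rightarrow> real" where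
  "Lo n B i w q = (\<Sum>j\<in>{..<n}-{i}. if w j > q then B j else 0)"
definition Uo :: "nat \<Rightarrow> (nat \<Rightarrow> real) \<Rightarrow> nat \<Rightarrow> (nat \<Rightarrow> real) \<Rightarrow> real \<Rightarrow> real" where
  "Uo n B i w q = (\<Sum>j\<in>{..<n}-{i}. if w j \<ge> q then B j else 0)"

lemma Lo_upd[simp]: "Lo n B i (w(i:=a)) q = Lo n B i w q"
  unfolding Lo_def by (rule sum.cong) auto
lemma Uo_upd[simp]: "Uo n B i (w(i:=a)) q = Uo n B i w q"
  unfolding Uo_def by (rule sum.cong) auto

lemma Lo_nonneg: "\<forall>j<n. B j > 0 \<Longrightarrow> Lo n B i w q \<ge> 0"
  unfolding Lo_def by (rule sum_nonneg) (auto simp: less_imp_le)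

lemma Uo_le_Lo: "\<forall>j<n. B j > 0 \<Longrightarrow> q1 < q2 \<Longrightarrow> Uo n B i w q2 \<le> Lo n B i w q1"
  unfolding Lo_def Uo_def by (rule sum_mono) (auto simp: less_imp_le)

lemma XU:
  assumes po: "price_ok n B w x q" and i: "i < n"
  shows "x i + Lo n B i w q / q \<le> 1"
proof -
  have q: "q > 0" using po by (simp add: price_ok_def)
  have "Lo n B i w q / q = (\<Sum>j\<in>{..<n}-{i}. if w j > q then B j / q else 0)"
    unfolding Lo_def sum_divide_distrib by (rule sum.cong) auto
  also have "\<dots> \<le> (\<Sum>j\<in>{..<n}-{i}. x j)"
    using po by (intro sum_mono) (auto simp: price_ok_def)
  finally have "x i + Lo n B i w q / q \<le> x i + (\<Sum>j\<in>{..<n}-{i}. x j)" by simp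
  also have "\<dots> = (\<Sum>j<n. x j)" using i by (simp add: sum.remove)
  also have "\<dots> = 1" using po by (simp add: price_ok_def)
  finally show ?thesis .
qed

lemma XL:
  assumes po: "price_ok n B w x q" and i: "i < n"
  shows "1 \<le> x i + Uo n B i w q / q"
proof -
  have q: "q > 0" using po by (simp add: price_ok_def)
  have "1 = (\<Sum>j<n. x j)" using po by (simp add: price_ok_def)
  also have "\<dots> = x i + (\<Sum>j\<in>{..<n}-{i}. x j)" using i by (simp add: sum.remove)
  also have "(\<Sum>j\<in>{..<n}-{i}. x j) \<le> (\<Sum>j\<in>{..<n}-{i}. if w j \<ge> q then B j / q else 0)"
  proof (intro sum_mono)
    fix j assume "j \<in> {..<n}-{i}"
    then have j: "j < n" by simp
    show "x j \<le> (if w j \<ge> q then B j / q else 0)"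
      using po j unfolding price_ok_def
      by (cases "w j > q"; cases "w j = q") auto
  qed
  also have "(\<Sum>j\<in>{..<n}-{i}. if w j \<ge> q then B j / q else 0) = Uo n B i w q / q"
    unfolding Uo_def sum_divide_distrib by (rule sum.cong) auto
  finally show ?thesis by simp
qed

lemma PC1:
  assumes po: "price_ok n B w x q" and i: "i < n"
  shows "(if w i > q then B i else 0) + Lo n B i w q \<le> q"
proof -
  have q: "q > 0" and xi: "x i \<ge> 0" and gt: "w i > q \<Longrightarrow> x i = B i / q"
    using po i by (auto simp: price_ok_def)
  have "(if w i > q then B i else 0) / q + Lo n B i w q / q \<le> 1"
    using XU[OF po i] xi gt by (cases "w i > q") auto
  then have "((if w i > q then B i else 0) + Lo n B i w q) / q \<le> 1"
    by (simp add: add_divide_distrib)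
  then show ?thesis using q by (simp add: divide_le_eq)
qed

lemma PC2:
  assumes po: "price_ok n B w x q" and i: "i < n"
  shows "q \<le> (if w i \<ge> q then B i else 0) + Uo n B i w q"
proof -
  have q: "q > 0" and xi: "w i < q \<Longrightarrow> x i = 0" and ge: "w i \<ge> q \<Longrightarrow> x i \<le> B i / q"
    using po i unfolding price_ok_def by (auto simp: le_less)
  have "1 \<le> (if w i \<ge> q then B i else 0) / q + Uo n B i w q / q"
    using XL[OF po i] xi ge by (cases "w i \<ge> q") auto
  then have "1 \<le> ((if w i \<ge> q then B i else 0) + Uo n B i w q) / q"
    by (simp add: add_divide_distrib)
  then show ?thesis using q by (simp add: le_divide_eq)
qed

lemma price_unique:
  assumes Bpos: "\<forall>j<n. B j > 0" and i: "i < n"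
    and pa: "price_ok n B (v(i:=a)) xa qa" and pb: "price_ok n B (v(i:=b)) xb qb"
    and a: "a > qa" and b: "b > qa"
  shows "qb = qa \<and> xb i = B i / qa"
proof -
  have Bi: "B i > 0" using Bpos i by simp
  have 1: "B i + Lo n B i v qa \<le> qa" using PC1[OF pa i] a by simp
  have 2: "qa \<le> B i + Uo n B i v qa" using PC2[OF pa i] a by simp
  have 3: "(if b > qb then B i else 0) + Lo n B i v qb \<le> qb" using PC1[OF pb i] by simp
  have 4: "qb \<le> (if b \<ge> qb then B i else 0) + Uo n B i v qb" using PC2[OF pb i] by simp
  have "\<not> qb > qa"
  proof
    assume "qb > qa"
    then have "Uo n B i v qb \<le> Lo n B i v qa" by (rule Uo_le_Lo[OF Bpos])
    moreover have "(if b \<ge> qb then B i else 0) \<le> B i" using Bi by simp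
    ultimately show False using 1 4 \<open>qb > qa\<close> by linarith
  qed
  moreover have "\<not> qb < qa"
  proof
    assume "qb < qa"
    then have "Uo n B i v qa \<le> Lo n B i v qb" by (rule Uo_le_Lo[OF Bpos])
    moreover have "b > qb" using b \<open>qb < qa\<close> by simp
    ultimately show False using 2 3 \<open>qb < qa\<close> by simp
  qed
  ultimately have "qb = qa" by simp
  then show ?thesis using pb b i by (simp add: price_ok_def)
qed

lemma alloc_mono:
  assumes Bpos: "\<forall>j<n. B j > 0" and i: "i < n"
    and pa: "price_ok n B (v(i:=a)) xa q" and pb: "price_ok n B (v(i:=b)) xb q'"
    and ab: "a < b"
  shows "xa i \<le> xb i"
proof -
  have Bi: "B i > 0" using Bpos i by simp
  have q: "q > 0" and q': "q' > 0" using pa pb by (auto simp: price_ok_def)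
  have xbnn: "xb i \<ge> 0" using pb i by (simp add: price_ok_def)
  have xanne: "xa i \<ge> 0" using pa i by (simp add: price_ok_def)
  have Lnn: "Lo n B i v q \<ge> 0" using Lo_nonneg[OF Bpos] .
  consider "a < q" | "a > q" | "a = q" by linarith
  then show ?thesis
  proof cases
    case 1 then show ?thesis using pa i xbnn by (simp add: price_ok_def)
  next
    case 2
    then have "q' = q \<and> xb i = B i / q" using price_unique[OF Bpos i pa pb] ab by simp
    moreover have "xa i = B i / q" using pa i 2 by (simp add: price_ok_def)
    ultimately show ?thesis by simp
  next
    case 3
    have XUa: "xa i + Lo n B i v q / q \<le> 1" using XU[OF pa i] by simp
    have xale: "xa i \<le> B i / q" using pa i 3 by (simp add: price_ok_def)
    have PC2a: "q \<le> B i + Uo n B i v q" using PC2[OF pa i] 3 by simp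
    have PC1b: "(if b > q' then B i else 0) + Lo n B i v q' \<le> q'" using PC1[OF pb i] by simp
    have PC2b: "q' \<le> (if b \<ge> q' then B i else 0) + Uo n B i v q'" using PC2[OF pb i] by simp
    have XLb: "1 \<le> xb i + Uo n B i v q' / q'" using XL[OF pb i] by simp
    have "\<not> q' < q"
    proof
      assume lt: "q' < q"
      then have "Uo n B i v q \<le> Lo n B i v q'" by (rule Uo_le_Lo[OF Bpos])
      moreover have "b > q'" using lt 3 ab by simp
      ultimately show False using PC2a PC1b lt by simp
    qed
    then have qq: "q \<le> q'" by simp
    have key: "q < q' \<Longrightarrow> 1 - Lo n B i v q / q \<le> 1 - Lo n B i v q / q'"
    proof -
      assume "q < q'"
      then have "Lo n B i v q / q' \<le> Lo n B i v q / q" using q Lnn by (intro divide_left_mono) auto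
      then show ?thesis by simp
    qed
    consider "b > q'" | "b = q'" | "b < q'" by linarith
    then show ?thesis
    proof cases
      case 1
      then have xb: "xb i = B i / q'" using pb i by (simp add: price_ok_def)
      show ?thesis
      proof (cases "q' = q")
        case True then show ?thesis using xb xale by simp
      next
        case False
        then have lt: "q < q'" using qq by simp
        have "q' \<le> B i + Lo n B i v q" using PC2b 1 Uo_le_Lo[OF Bpos lt, of i v] by simp
        then have "(q' - Lo n B i v q) / q' \<le> B i / q'" using q' by (intro divide_right_mono) auto
        moreover have "(q' - Lo n B i v q) / q' = 1 - Lo n B i v q / q'"
          using q' by (simp add: diff_divide_distrib)
        ultimately show ?thesis using key[OF lt] XUa xb by simp
      qed
    next
      case 2
      then have lt: "q < q'" using 3 ab by simp
      have "Uo n B i v q' / q' \<le> Lo n B i v q / q'"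
        using Uo_le_Lo[OF Bpos lt, of i v] q' by (intro divide_right_mono) auto
      then show ?thesis using XLb key[OF lt] XUa by simp
    next
      case 4: 3
      then have lt: "q < q'" using 3 ab by simp
      have "q' \<le> Lo n B i v q" using PC2b 4 Uo_le_Lo[OF Bpos lt, of i v] by simp
      then have "q \<le> Lo n B i v q" using lt by simp
      then have "1 \<le> Lo n B i v q / q" using q by (simp add: le_divide_eq)
      then show ?thesis using XUa xbnn by simp
    qed
  qed
qed



lemma po_upd:
  assumes n: "n \<ge> 1" and Bpos: "\<forall>j<n. B j > 0" and v: "valid_profile n v" and i: "i < n" and u: "u > 0"
  shows "price_ok n B (v(i:=u)) (upa_alloc n B (v(i:=u))) (upa_p n B (v(i:=u)))"
  using v i u by (intro upa_price_ok[OF n Bpos]) (auto simp: valid_profile_def less_imp_le)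

lemma po_v:
  assumes n: "n \<ge> 1" and Bpos: "\<forall>j<n. B j > 0" and v: "valid_profile n v"
  shows "price_ok n B v (upa_alloc n B v) (upa_p n B v)"
proof (intro upa_price_ok[OF n Bpos])
  show "\<forall>j<n. 0 \<le> v j" using v by (auto simp: valid_profile_def less_imp_le)
  show "\<exists>j<n. 0 < v j" using v n by (intro exI[of _ 0]) (auto simp: valid_profile_def)
qed

lemma LW_bound:
  assumes n: "n \<ge> 1" and Bpos: "\<forall>j<n. B j > 0" and v: "valid_profile n v"
  shows "liquid_welfare n B v (upa_alloc n B v) \<ge> opt_liquid_welfare n B v / 2"
proof -
  define x where "x = upa_alloc n B v"
  define q where "q = upa_p n B v"
  have po: "price_ok n B v x q" unfolding x_def q_def using po_v[OF n Bpos v] .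
  have q: "q > 0" using po by (simp add: price_ok_def)
  define L where "L = (\<Sum>j<n. if v j > q then B j else 0)"
  have LW1: "liquid_welfare n B v x \<ge> q"
  proof -
    have "q = (\<Sum>j<n. q * x j)" using po by (simp add: price_ok_def sum_distrib_left[symmetric])
    also have "\<dots> \<le> (\<Sum>j<n. min (v j * x j) (B j))"
    proof (rule sum_mono)
      fix j assume "j \<in> {..<n}"
      then have j: "j < n" by simp
      consider "v j > q" | "v j < q" | "v j = q" by linarith
      then show "q * x j \<le> min (v j * x j) (B j)"
      proof cases
        case 1
        then have xj: "x j = B j / q" using po j by (simp add: price_ok_def)
        have "q * x j = B j" using xj q by simp
        moreover have "q * x j \<le> v j * x j" using 1 po j by (intro mult_right_mono) (auto simp: price_ok_def)
        ultimately show ?thesis by simp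
      next
        case 2
        then show ?thesis using po j Bpos by (auto simp: price_ok_def less_imp_le)
      next
        case 3
        then have "x j \<le> B j / q" using po j by (simp add: price_ok_def)
        then have "q * x j \<le> B j" using q by (simp add: le_divide_eq mult.commute)
        then show ?thesis using 3 by simp
      qed
    qed
    finally show ?thesis unfolding liquid_welfare_def .
  qed
  have LW2: "liquid_welfare n B v x \<ge> L"
    unfolding liquid_welfare_def L_def
  proof (rule sum_mono)
    fix j assume "j \<in> {..<n}"
    then have j: "j < n" by simp
    have xnn: "x j \<ge> 0" using po j by (simp add: price_ok_def)
    have vnn: "v j > 0" using v j by (simp add: valid_profile_def)
    show "(if v j > q then B j else 0) \<le> min (v j * x j) (B j)"
    proof (cases "v j > q")
      case True
      then have xj: "x j = B j / q" using po j by (simp add: price_ok_def)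
      have "B j = q * x j" using xj q by simp
      also have "\<dots> \<le> v j * x j" using True xnn by (intro mult_right_mono) auto
      finally show ?thesis using True by simp
    next
      case False
      then show ?thesis using xnn vnn Bpos j by (simp add: less_imp_le)
    qed
  qed
  define Sset where "Sset = {liquid_welfare n B v y | y. (\<forall>i<n. y i \<ge> 0) \<and> (\<Sum>i<n. y i) = 1}"
  have ne: "Sset \<noteq> {}"
  proof -
    define y :: "nat \<Rightarrow> real" where "y = (\<lambda>j. if j = 0 then 1 else 0)"
    have "(\<Sum>i<n. y i) = 1" using n unfolding y_def by (simp add: sum.delta)
    moreover have "\<forall>i<n. y i \<ge> 0" unfolding y_def by simp
    ultimately show ?thesis unfolding Sset_def by blast
  qed
  have ub: "\<And>z. z \<in> Sset \<Longrightarrow> z \<le> L + q"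
  proof -
    fix z assume "z \<in> Sset"
    then obtain y where y: "z = liquid_welfare n B v y" "\<forall>i<n. y i \<ge> 0" "(\<Sum>i<n. y i) = 1"
      unfolding Sset_def by blast
    have "z \<le> (\<Sum>j<n. (if v j > q then B j else 0) + q * y j)"
      unfolding y(1) liquid_welfare_def
    proof (rule sum_mono)
      fix j assume "j \<in> {..<n}"
      then have j: "j < n" by simp
      have yj: "y j \<ge> 0" using y j by simp
      show "min (v j * y j) (B j) \<le> (if v j > q then B j else 0) + q * y j"
      proof (cases "v j > q")
        case True
        have "q * y j \<ge> 0" using q yj by simp
        then show ?thesis using True by (simp add: min_le_iff_disj)
      next
        case False
        then have "v j * y j \<le> q * y j" using yj by (intro mult_right_mono) auto
        then show ?thesis using False by simp
      qed
    qed
    also have "\<dots> = L + q" unfolding L_def sum.distrib sum_distrib_left[symmetric] using y by simp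
    finally show "z \<le> L + q" .
  qed
  have "opt_liquid_welfare n B v \<le> L + q"
    unfolding opt_liquid_welfare_def Sset_def[symmetric] using ne ub by (rule cSup_least)
  then show ?thesis using LW1 LW2 unfolding x_def by simp
qed



definition hfun :: "nat \<Rightarrow> (nat \<Rightarrow> real) \<Rightarrow> (nat \<Rightarrow> real) \<Rightarrow> nat \<Rightarrow> real \<Rightarrow> real" where
  "hfun n B v i u = (if u \<le> 0 then 0 else upa_alloc n B (v(i:=u)) i)"

context
  fixes n :: nat and B v :: "nat \<Rightarrow> real" and i :: nat
  assumes n: "n \<ge> 1" and Bpos: "\<forall>j<n. B j > 0" and v: "valid_profile n v" and i: "i < n"
begin

lemma f_nonneg: "u > 0 \<Longrightarrow> upa_alloc n B (v(i:=u)) i \<ge> 0"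
  using po_upd[OF n Bpos v i] i by (simp add: price_ok_def)

lemma f_mono: "0 < a \<Longrightarrow> a \<le> b \<Longrightarrow> upa_alloc n B (v(i:=a)) i \<le> upa_alloc n B (v(i:=b)) i"
  using alloc_mono[OF Bpos i po_upd[OF n Bpos v i, of a] po_upd[OF n Bpos v i, of b]]
  by (cases "a = b") auto

lemma h_mono: "mono (hfun n B v i)"
proof (rule monoI)
  fix a b :: real assume ab: "a \<le> b"
  show "hfun n B v i a \<le> hfun n B v i b"
  proof (cases "a \<le> 0")
    case True then show ?thesis using f_nonneg by (simp add: hfun_def)
  next
    case False then show ?thesis using ab f_mono by (simp add: hfun_def)
  qed
qed

lemma h_int: "hfun n B v i integrable_on {a..b}"
  by (rule integrable_on_mono_on) (use h_mono in \<open>auto simp: mono_on_def mono_def\<close>)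

lemma int_eq: "integral {0..c} (\<lambda>u. upa_alloc n B (v(i:=u)) i) = integral {0..c} (hfun n B v i)"
  by (rule integral_spike[of "{0}"]) (auto simp: hfun_def)

lemma h_pos: "u > 0 \<Longrightarrow> hfun n B v i u = upa_alloc n B (v(i:=u)) i"
  by (simp add: hfun_def)

lemma h_nonneg: "hfun n B v i u \<ge> 0"
  using f_nonneg by (simp add: hfun_def)

lemma pay_eq: "upa_pay n B (v(i:=b)) i = b * hfun n B v i b - integral {0..b} (hfun n B v i)"
  if "b > 0"
  using that unfolding upa_pay_def by (simp add: int_eq[symmetric] h_pos)

lemma budget: "upa_pay n B v i \<le> B i"
proof -
  have vi: "v i > 0" using v i by (simp add: valid_profile_def)
  define q where "q = upa_p n B (v(i := v i))"
  have po: "price_ok n B (v(i:=v i)) (upa_alloc n B (v(i:=v i))) q"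
    unfolding q_def using po_upd[OF n Bpos v i vi] .
  have q: "q > 0" using po by (simp add: price_ok_def)
  have pay: "upa_pay n B v i = v i * hfun n B v i (v i) - integral {0..v i} (hfun n B v i)"
    using pay_eq[of "v i"] vi by simp
  have Ip: "\<And>a b. integral {a..b} (hfun n B v i) \<ge> 0 \<or> b < a"
    using h_nonneg h_int by (meson integral_nonneg)
  show ?thesis
  proof (cases "v i > q")
    case False
    have "v i * hfun n B v i (v i) \<le> B i"
    proof (cases "v i < q")
      case True
      then have "hfun n B v i (v i) = 0" using po i vi by (simp add: price_ok_def h_pos)
      then show ?thesis using Bpos i by (simp add: less_imp_le)
    next
      case F2: False
      then have eq: "v i = q" using False by simp
      then have "hfun n B v i (v i) \<le> B i / q" using po i vi by (simp add: price_ok_def h_pos)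
      then show ?thesis using eq q by (simp add: le_divide_eq mult.commute)
    qed
    moreover have "integral {0..v i} (hfun n B v i) \<ge> 0"
      using h_nonneg h_int by (intro integral_nonneg) auto
    ultimately show ?thesis using pay by simp
  next
    case True
    have hv: "hfun n B v i (v i) = B i / q" using po i vi True by (simp add: price_ok_def h_pos)
    have const: "\<And>u. q < u \<Longrightarrow> hfun n B v i u = B i / q"
    proof -
      fix u assume u: "q < u"
      have "upa_p n B (v(i:=u)) = q \<and> upa_alloc n B (v(i:=u)) i = B i / q"
        using price_unique[OF Bpos i po po_upd[OF n Bpos v i, of u]] True u q by simp
      then show "hfun n B v i u = B i / q" using u q by (simp add: h_pos)
    qed
    have "integral {q..v i} (hfun n B v i) = integral {q..v i} (\<lambda>_. B i / q)"
      by (rule integral_spike[of "{q}"]) (auto simp: const)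
    also have "\<dots> = (v i - q) * (B i / q)" using True by simp
    finally have I2: "integral {q..v i} (hfun n B v i) = (v i - q) * (B i / q)" .
    have I1: "integral {0..q} (hfun n B v i) \<ge> 0"
      using h_nonneg h_int by (intro integral_nonneg) auto
    have "integral {0..q} (hfun n B v i) + integral {q..v i} (hfun n B v i) = integral {0..v i} (hfun n B v i)"
      using Henstock_Kurzweil_Integration.integral_combine[of 0 q "v i" "hfun n B v i"] q True h_int by simp
    then have "integral {0..v i} (hfun n B v i) \<ge> (v i - q) * (B i / q)" using I1 I2 by simp
    then have "upa_pay n B v i \<le> v i * (B i / q) - (v i - q) * (B i / q)" using pay hv by simp
    also have "\<dots> = B i" using q by (simp add: field_simps)
    finally show ?thesis .
  qed
qed

lemma myerson:
  assumes b: "b > 0"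
  shows "v i * hfun n B v i b - (b * hfun n B v i b - integral {0..b} (hfun n B v i))
         \<le> integral {0..v i} (hfun n B v i)"
proof -
  have vi: "v i > 0" using v i by (simp add: valid_profile_def)
  let ?h = "hfun n B v i"
  show ?thesis
  proof (cases "b \<le> v i")
    case True
    have c: "integral {0..b} ?h + integral {b..v i} ?h = integral {0..v i} ?h"
      using Henstock_Kurzweil_Integration.integral_combine[of 0 b "v i" "hfun n B v i"] b True h_int by simp
    have "integral {b..v i} (\<lambda>_. ?h b) \<le> integral {b..v i} ?h"
      using h_int h_mono by (intro integral_le) (auto simp: mono_def)
    then have "(v i - b) * ?h b \<le> integral {b..v i} ?h" using True by simp
    then show ?thesis using c by (simp add: algebra_simps)
  next
    case False
    have c: "integral {0..v i} ?h + integral {v i..b} ?h = integral {0..b} ?h"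
      using Henstock_Kurzweil_Integration.integral_combine[of 0 "v i" b "hfun n B v i"] vi False h_int by simp
    have "integral {v i..b} ?h \<le> integral {v i..b} (\<lambda>_. ?h b)"
      using h_int h_mono by (intro integral_le) (auto simp: mono_def)
    then have "integral {v i..b} ?h \<le> (b - v i) * ?h b" using False by simp
    then show ?thesis using c by (simp add: algebra_simps)
  qed
qed

lemma IC:
  assumes b: "b > 0"
  shows "upa_util n B v v i \<ge> upa_util n B v (v(i := b)) i"
proof -
  have vi: "v i > 0" using v i by (simp add: valid_profile_def)
  have vv: "v(i := v i) = v" by simp
  have payv: "upa_pay n B v i = v i * hfun n B v i (v i) - integral {0..v i} (hfun n B v i)"
    using pay_eq[of "v i"] vi by simp
  have av: "upa_alloc n B v i = hfun n B v i (v i)" using h_pos[of "v i"] vi by simp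
  have ab: "upa_alloc n B (v(i:=b)) i = hfun n B v i b" using h_pos[of b] b by simp
  have lhs: "upa_util n B v v i = ereal (integral {0..v i} (hfun n B v i))"
    unfolding upa_util_def using budget payv av by simp
  show ?thesis
  proof (cases "upa_pay n B (v(i:=b)) i \<le> B i")
    case True
    then have "upa_util n B v (v(i := b)) i =
       ereal (v i * hfun n B v i b - (b * hfun n B v i b - integral {0..b} (hfun n B v i)))"
      unfolding upa_util_def using pay_eq[OF b] ab by simp
    then show ?thesis using lhs myerson[OF b] by simp
  next
    case False
    then show ?thesis unfolding upa_util_def by simp
  qed
qed

end

theorem mainTheorem8:
  fixes n :: nat and B :: "nat \<Rightarrow> real"
  assumes "n \<ge> 1"
    and "\<forall>i<n. B i > 0"
  shows "(\<forall>v i b. valid_profile n v \<and> i < n \<and> b > 0 \<longrightarrow>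
            upa_util n B v v i \<ge> upa_util n B v (v(i := b)) i)
       \<and> (\<forall>v i. valid_profile n v \<and> i < n \<longrightarrow> upa_pay n B v i \<le> B i)
       \<and> (\<forall>v. valid_profile n v \<longrightarrow>
            liquid_welfare n B v (upa_alloc n B v) \<ge> opt_liquid_welfare n B v / 2)"
  using IC[OF assms] budget[OF assms] LW_bound[OF assms] by blast


end
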